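(* Let $m\ge 2$ and $1\le\ell<m$, and let $0<\varepsilon<m-\ell$. There is no rule $\mathcal{F}$ that takes an $\ell$-truncated election and returns a single candidate such that, for every election $E$, $\mathrm{sc}_{\mathrm{MM}}(\mathcal{F}(\mathrm{trunc}(E,\ell)))\ge\frac{1}{m-\ell-\varepsilon}\max_{c\in C}\mathrm{sc}_{\mathrm{MM}}(c)$. In other words, no algorithm working on $\ell$-truncated ballots is a $\frac{1}{m-\ell-\varepsilon}$-approximation of the Minimax rule.
   Context: An election consists of a set $V$ of $n$ voters and a set $C$ of $m$ candidates; each voter $v$ has a strict linear order $\succ_v$ over $C$. For $c,c'\in C$, $\mathrm{sc}_{\mathrm{MM}}(c,c')=|\{v: c\succ_v c'\}|$ and $\mathrm{sc}_{\mathrm{MM}}(c)=\min_{c'\neq c}\mathrm{sc}_{\mathrm{MM}}(c,c')$; the Minimax rule selects candidates maximizing $\mathrm{sc}_{\mathrm{MM}}$. $\mathrm{trunc}(E,\ell)$ is the partial election in which each voter reveals only the ordered list of her top $\ell$ candidates. *)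

theory Defs
  imports Complex_Main
begin

text \<open>A ballot (linear order over the candidate set C) is a list of the candidates,
  most preferred first. An election is a list of ballots, one per voter.\<close>

definition is_ballot :: "'a set \<Rightarrow> 'a list \<Rightarrow> bool" where
  "is_ballot C r \<longleftrightarrow> distinct r \<and> set r = C"

definition is_election :: "'a set \<Rightarrow> 'a list list \<Rightarrow> bool" where
  "is_election C E \<longleftrightarrow> (\<forall>r\<in>set E. is_ballot C r)"

definition prefers :: "'a list \<Rightarrow> 'a \<Rightarrow> 'a \<Rightarrow> bool" where
  "prefers r c c' \<longleftrightarrow> (\<exists>i j. i < j \<and> j < length r \<and> r ! i = c \<and> r ! j = c')"

definition sc_pair :: "'a list list \<Rightarrow> 'a \<Rightarrow> 'a \<Rightarrow> nat" where
  "sc_pair E c c' = card {i. i < length E \<and> prefers (E ! i) c c'}"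

definition sc_MM :: "'a set \<Rightarrow> 'a list list \<Rightarrow> 'a \<Rightarrow> nat" where
  "sc_MM C E c = Min ((\<lambda>c'. sc_pair E c c') ` (C - {c}))"

definition trunc :: "'a list list \<Rightarrow> nat \<Rightarrow> 'a list list" where
  "trunc E l = map (take l) E"

end

theory Submission
  imports Defs
begin

definition idx :: "nat \<Rightarrow> nat \<Rightarrow> nat \<Rightarrow> nat" where
  "idx m i j = (if i + j < m then i + j else i + j - m)"

definition tb :: "'a list \<Rightarrow> nat \<Rightarrow> nat \<Rightarrow> nat \<Rightarrow> 'a list" where
  "tb cs m l i = map (\<lambda>j. cs ! idx m i j) [0..<l]"

definition bal :: "'a list \<Rightarrow> nat \<Rightarrow> nat \<Rightarrow> 'a \<Rightarrow> nat \<Rightarrow> 'a list" where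
  "bal cs m l p i = tb cs m l i @ filter (\<lambda>c. c \<notin> set (tb cs m l i)) (p # removeAll p cs)"

lemma mem_tb:
  assumes "distinct cs" "length cs = m" "l < m" "i < m" "k < m"
  shows "cs!k \<in> set (tb cs m l i) \<longleftrightarrow> (if i \<le> k then k - i else k + m - i) < l"
proof
  assume "cs!k \<in> set (tb cs m l i)"
  then obtain j where j: "j<l" "cs!k = cs!idx m i j" by (auto simp: tb_def)
  have "idx m i j < m" using j assms by (auto simp: idx_def)
  hence "k = idx m i j" using j assms nth_eq_iff_index_eq by metis
  thus "(if i \<le> k then k - i else k + m - i) < l" using j assms by (auto simp: idx_def split: if_splits)
next
  assume h: "(if i \<le> k then k - i else k + m - i) < l"
  define j where "j = (if i \<le> k then k - i else k + m - i)"
  have "idx m i j = k" using assms by (auto simp: idx_def j_def)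
  moreover have "j < l" using h j_def by simp
  ultimately show "cs!k \<in> set (tb cs m l i)" unfolding tb_def
    by (metis atLeastLessThan_iff image_eqI le0 list.set_map set_upt)
qed

lemma len_tb: "length (tb cs m l i) = l" by (simp add: tb_def)

lemma nth_tb: "j < l \<Longrightarrow> tb cs m l i ! j = cs ! idx m i j" by (simp add: tb_def)

lemma distinct_tb:
  assumes "distinct cs" "length cs = m" "l < m" "i < m"
  shows "distinct (tb cs m l i)"
  unfolding tb_def distinct_map
proof
  show "distinct [0..<l]" by simp
  show "inj_on (\<lambda>j. cs ! idx m i j) (set [0..<l])"
  proof (rule inj_onI)
    fix a b assume a: "a \<in> set [0..<l]" and b: "b \<in> set [0..<l]"
      and e: "cs ! idx m i a = cs ! idx m i b"
    have "idx m i a < m" "idx m i b < m" using a b assms by (auto simp: idx_def)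
    hence "idx m i a = idx m i b" using e assms nth_eq_iff_index_eq by metis
    thus "a = b" using a b assms by (auto simp: idx_def split: if_splits)
  qed
qed

lemma set_tb: "length cs = m \<Longrightarrow> l < m \<Longrightarrow> i < m \<Longrightarrow> set (tb cs m l i) \<subseteq> set cs"
  by (auto simp: tb_def idx_def)

lemma pref_asym: "distinct r \<Longrightarrow> prefers r a b \<Longrightarrow> \<not> prefers r b a"
  unfolding prefers_def
  by (metis less_asym less_trans nth_eq_iff_index_eq)

lemma pref_app1: "a \<in> set t \<Longrightarrow> b \<in> set f \<Longrightarrow> prefers (t@f) a b"
proof -
  assume "a \<in> set t" "b \<in> set f"
  then obtain i j where "i < length t" "t!i = a" "j < length f" "f!j = b"
    by (auto simp: in_set_conv_nth)
  thus ?thesis unfolding prefers_def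
    by (rule_tac x=i in exI, rule_tac x="length t + j" in exI) (auto simp: nth_append)
qed

lemma pref_app2: "b \<in> set f \<Longrightarrow> prefers (t @ a # f) a b"
proof -
  assume "b \<in> set f"
  then obtain j where "j < length f" "f!j = b"
    by (auto simp: in_set_conv_nth)
  thus ?thesis unfolding prefers_def
    by (rule_tac x="length t" in exI, rule_tac x="length t + Suc j" in exI) (auto simp: nth_append)
qed

lemma ballot_bal:
  assumes "distinct cs" "length cs = m" "l < m" "i < m" "p \<in> set cs"
  shows "is_ballot (set cs) (bal cs m l p i)"
proof -
  have d: "distinct (p # removeAll p cs)" using assms by (simp add: distinct_removeAll)
  have s: "set (p # removeAll p cs) = set cs" using assms by auto
  show ?thesis unfolding is_ballot_def bal_def
    using distinct_tb[OF assms(1-4)] set_tb[OF assms(2-4)] d s by auto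
qed

lemma pz:
  assumes "distinct cs" "length cs = m" "l < m" "i < m" "p \<in> set cs"
    "z \<in> set cs" "z \<noteq> p" "z \<notin> set (tb cs m l i)"
  shows "prefers (bal cs m l p i) p z"
proof (cases "p \<in> set (tb cs m l i)")
  case True
  thus ?thesis unfolding bal_def using assms by (intro pref_app1) auto
next
  case False
  hence "bal cs m l p i = tb cs m l i @ p # filter (\<lambda>c. c \<notin> set (tb cs m l i)) (removeAll p cs)"
    by (simp add: bal_def)
  thus ?thesis using assms by (simp add: pref_app2)
qed

lemma px:
  assumes "distinct cs" "length cs = m" "l < m" "i < m" "k < m" "i \<noteq> k"
    "cs!k \<in> set (tb cs m l i)"
  shows "prefers (bal cs m l p i) (cs ! (if k = 0 then m - 1 else k - 1)) (cs!k)"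
proof -
  define d where "d = (if i \<le> k then k - i else k + m - i)"
  have dl: "d < l" using mem_tb[OF assms(1-5)] assms(7) d_def by simp
  have d1: "1 \<le> d" using assms d_def by auto
  have "idx m i d = k" using assms d_def by (auto simp: idx_def)
  moreover have "idx m i (d - 1) = (if k = 0 then m - 1 else k - 1)"
    using assms d_def d1 by (auto simp: idx_def)
  ultimately have e1: "bal cs m l p i ! d = cs!k"
    and e2: "bal cs m l p i ! (d-1) = cs ! (if k = 0 then m - 1 else k - 1)"
    using dl by (auto simp: bal_def nth_append len_tb nth_tb)
  have "d < length (bal cs m l p i)" using dl by (simp add: bal_def len_tb)
  thus ?thesis unfolding prefers_def using e1 e2 d1
    by (rule_tac x="d-1" in exI, rule_tac x=d in exI) auto
qed

theorem theorem7:
  fixes C :: "'a set" and m l :: nat and \<epsilon> :: real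
  assumes "finite C" and "card C = m" and "m \<ge> 2"
    and "1 \<le> l" and "l < m"
    and "0 < \<epsilon>" and "\<epsilon> < real m - real l"
  shows "\<not> (\<exists>F :: 'a list list \<Rightarrow> 'a. \<forall>E. is_election C E \<longrightarrow>
            F (trunc E l) \<in> C \<and>
            real (sc_MM C E (F (trunc E l)))
              \<ge> (1 / (real m - real l - \<epsilon>)) * real (Max (sc_MM C E ` C)))"
proof
  assume "\<exists>F :: 'a list list \<Rightarrow> 'a. \<forall>E. is_election C E \<longrightarrow>
            F (trunc E l) \<in> C \<and>
            real (sc_MM C E (F (trunc E l)))
              \<ge> (1 / (real m - real l - \<epsilon>)) * real (Max (sc_MM C E ` C))"
  then obtain F :: "'a list list \<Rightarrow> 'a" where HF: "\<And>E. is_election C E \<Longrightarrow>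
            F (trunc E l) \<in> C \<and>
            real (sc_MM C E (F (trunc E l)))
              \<ge> (1 / (real m - real l - \<epsilon>)) * real (Max (sc_MM C E ` C))" by blast
  obtain cs where cs: "distinct cs" "set cs = C" using finite_distinct_list[OF assms(1)] by blast
  have lcs: "length cs = m" using cs assms(2) distinct_card by fastforce
  define El where "El p = map (bal cs m l p) [0..<m]" for p
  have elec: "is_election C (El p)" if "p \<in> C" for p
    using ballot_bal[OF cs(1) lcs assms(5)] that cs by (auto simp: is_election_def El_def)
  have tr: "trunc (El p) l = map (tb cs m l) [0..<m]" for p
    by (simp add: trunc_def El_def bal_def len_tb)
  have c0: "cs ! 0 \<in> C" proof - have "0 < length cs" using lcs assms(3) by simp thus ?thesis using cs(2) nth_mem by blast qed
  define x where "x = F (map (tb cs m l) [0..<m])"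
  have xC: "x \<in> C" using HF[OF elec[OF c0]] tr x_def by simp
  then obtain k where k: "k < m" "cs ! k = x" using cs lcs by (metis in_set_conv_nth)
  define p where "p = cs ! (if k = 0 then m - 1 else k - 1)"
  have pC: "p \<in> C" using cs lcs assms(3) k p_def by auto
  have pcs: "p \<in> set cs" using pC cs by simp
  have km: "(if k = 0 then m - 1 else k - 1) < m" "(if k = 0 then m - 1 else k - 1) \<noteq> k"
    using k assms(3) by auto
  have xp: "x \<noteq> p"
  proof
    assume "x = p"
    hence "cs ! k = cs ! (if k = 0 then m - 1 else k - 1)" using k p_def by simp
    hence "k = (if k = 0 then m - 1 else k - 1)" using nth_eq_iff_index_eq[OF cs(1)] km k lcs by simp
    thus False using km by simp
  qed
  let ?E = "El p"
  have H: "real (sc_MM C ?E x) \<ge> (1 / (real m - real l - \<epsilon>)) * real (Max (sc_MM C ?E ` C))"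
    using HF[OF elec[OF pC]] tr x_def by simp
  have "{i. i < length ?E \<and> prefers (?E!i) x p} \<subseteq> {k}"
  proof
    fix i assume "i \<in> {i. i < length ?E \<and> prefers (?E!i) x p}"
    hence i: "i < m" "prefers (bal cs m l p i) x p" by (auto simp: El_def)
    have db: "distinct (bal cs m l p i)"
      using ballot_bal[OF cs(1) lcs assms(5) i(1) pcs] by (simp add: is_ballot_def)
    show "i \<in> {k}"
    proof (rule ccontr)
      assume "i \<notin> {k}"
      hence ik: "i \<noteq> k" by simp
      have "prefers (bal cs m l p i) p x"
      proof (cases "x \<in> set (tb cs m l i)")
        case True
        thus ?thesis using px[OF cs(1) lcs assms(5) i(1) k(1) ik] k p_def by simp
      next
        case False
        thus ?thesis using pz[OF cs(1) lcs assms(5) i(1) pcs] xC cs xp by auto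
      qed
      thus False using pref_asym[OF db] i(2) by blast
    qed
  qed
  hence "sc_pair ?E x p \<le> card {k}" unfolding sc_pair_def by (intro card_mono) auto
  hence "sc_pair ?E x p \<le> 1" by simp
  moreover have "sc_MM C ?E x \<le> sc_pair ?E x p"
    unfolding sc_MM_def using assms(1) pC xp by (intro Min_le) auto
  ultimately have sx: "sc_MM C ?E x \<le> 1" by linarith
  have lowz: "sc_pair ?E p z \<ge> m - l" if z: "z \<in> C" "z \<noteq> p" for z
  proof -
    obtain kz where kz: "kz < m" "cs ! kz = z" using z cs lcs by (metis in_set_conv_nth)
    define g where "g j = (if j \<le> kz then kz - j else kz + m - j)" for j
    have "inj_on g {l..<m}" unfolding inj_on_def g_def by auto
    moreover have "g ` {l..<m} \<subseteq> {i. i < length ?E \<and> prefers (?E!i) p z}"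
    proof
      fix i assume "i \<in> g ` {l..<m}"
      then obtain j where j: "l \<le> j" "j < m" "i = g j" by auto
      have im: "i < m" using j kz g_def by auto
      have "(if i \<le> kz then kz - i else kz + m - i) = j" using j kz g_def by auto
      hence "z \<notin> set (tb cs m l i)" using mem_tb[OF cs(1) lcs assms(5) im kz(1)] kz j by simp
      hence "prefers (bal cs m l p i) p z" using pz[OF cs(1) lcs assms(5) im pcs] z cs by auto
      thus "i \<in> {i. i < length ?E \<and> prefers (?E!i) p z}" using im by (simp add: El_def)
    qed
    ultimately have "card {l..<m} \<le> card {i. i < length ?E \<and> prefers (?E!i) p z}"
      by (intro card_inj_on_le) auto
    thus ?thesis by (simp add: sc_pair_def)
  qed
  have ne: "C - {p} \<noteq> {}"
  proof
    assume "C - {p} = {}"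
    hence "C \<subseteq> {p}" by auto
    hence "card C \<le> card {p}" by (intro card_mono) auto
    hence "card C \<le> 1" by simp
    thus False using assms by simp
  qed
  have "sc_MM C ?E p \<ge> m - l" unfolding sc_MM_def
    using assms(1) ne lowz by (subst Min_ge_iff) auto
  moreover have "Max (sc_MM C ?E ` C) \<ge> sc_MM C ?E p" using assms(1) pC by (intro Max_ge) auto
  ultimately have M: "real (Max (sc_MM C ?E ` C)) \<ge> real m - real l" using assms(5) by linarith
  have pos: "real m - real l - \<epsilon> > 0" using assms by simp
  have "(1 / (real m - real l - \<epsilon>)) * real (Max (sc_MM C ?E ` C))
        \<ge> (1 / (real m - real l - \<epsilon>)) * (real m - real l)"
    using M pos by (intro mult_left_mono) auto
  moreover have "(1 / (real m - real l - \<epsilon>)) * (real m - real l) > 1"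
    using pos assms(6) by (simp add: field_simps)
  ultimately show False using H sx by linarith
qed

end
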